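(* Let $p\ge1$, $\mathcal X=\{x\in\mathbb R^d:\|x\|_p\le1\}$, $c\in\mathbb R^d$ and $W=\Lambda=\mathrm{diag}(\lambda_1,\dots,\lambda_d)$ with $\lambda_i>0$; let $\Theta=\{\theta:\|\theta-c\|_W\le1\}$. Let $H(y)=-\sum_{i=1}^dy_i^{1/p}|c_i|-\sqrt{\sum_{i=1}^d\lambda_i^{-1}y_i^{2/p}}$ and consider $P_{C,p}$: minimize $H(y)$ over $y\in\Delta_{d-1}$. Given $y\in\Delta_{d-1}$ define $x_i=y_i^{1/p}\,\mathrm{sign}(c_i)$ and $\theta^\star=c+W^{-1}x/\|x\|_{W^{-1}}$. Then for any $\varepsilon>0$, $y$ is an $\varepsilon$-solution to $P_{C,p}$ if and only if $(x,\theta^\star)$ is an $\varepsilon$-solution to $P_B$.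
   Context: $\|z\|_M=\sqrt{z^\top Mz}$, $\|z\|_p=(\sum_i|z_i|^p)^{1/p}$. $\Delta_{d-1}=\{y\in\mathbb R^d:y_i\ge0,\sum_iy_i=1\}$. Convention $\mathrm{sign}(0)=1$. $P_B$: maximize $x^\top\theta$ over $(x,\theta)\in\mathcal X\times\Theta$; an $\varepsilon$-solution to $P_B$ is $(x,\theta)\in\mathcal X\times\Theta$ with $x^\top\theta\ge\sup_{\mathcal X\times\Theta}x'^\top\theta'-\varepsilon$; an $\varepsilon$-solution to $P_{C,p}$ is $y\in\Delta_{d-1}$ with $H(y)\le\min_{\Delta_{d-1}}H+\varepsilon$. *)

theory Defs
  imports "HOL-Analysis.Analysis"
begin

text \<open>Vectors in R^d are modelled as real^'n for a finite index type 'n (d = CARD('n)).\<close>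

definition Mnorm :: "real^'n^'n \<Rightarrow> real^'n \<Rightarrow> real" where
  "Mnorm M z = sqrt (z \<bullet> (M *v z))"

definition pnorm :: "real \<Rightarrow> real^'n \<Rightarrow> real" where
  "pnorm p z = (\<Sum>i\<in>UNIV. \<bar>z $ i\<bar> powr p) powr (1 / p)"

definition diag_mat :: "(real^'n) \<Rightarrow> real^'n^'n" where
  "diag_mat l = (\<chi> i j. if i = j then l $ i else 0)"

definition std_simplex :: "(real^'n) set" where
  "std_simplex = {y. (\<forall>i. 0 \<le> y $ i) \<and> (\<Sum>i\<in>UNIV. y $ i) = 1}"

text \<open>Sign with the convention sign(0) = 1.\<close>
definition sgn1 :: "real \<Rightarrow> real" where
  "sgn1 t = (if t < 0 then -1 else 1)"

definition Xset :: "real \<Rightarrow> (real^'n) set" where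
  "Xset p = {x. pnorm p x \<le> 1}"

definition Thetaset :: "real^'n^'n \<Rightarrow> real^'n \<Rightarrow> (real^'n) set" where
  "Thetaset W c = {\<theta>. Mnorm W (\<theta> - c) \<le> 1}"

definition Hfun :: "real \<Rightarrow> real^'n \<Rightarrow> real^'n \<Rightarrow> real^'n \<Rightarrow> real" where
  "Hfun p c l y = - (\<Sum>i\<in>UNIV. y $ i powr (1 / p) * \<bar>c $ i\<bar>)
                  - sqrt (\<Sum>i\<in>UNIV. inverse (l $ i) * y $ i powr (2 / p))"

definition eps_sol_PB :: "(real^'n) set \<Rightarrow> (real^'n) set \<Rightarrow> real \<Rightarrow> real^'n \<Rightarrow> real^'n \<Rightarrow> bool" where
  "eps_sol_PB X T \<epsilon> x \<theta> \<longleftrightarrow> x \<in> X \<and> \<theta> \<in> T \<and>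
     x \<bullet> \<theta> \<ge> (SUP xt\<in>X \<times> T. fst xt \<bullet> snd xt) - \<epsilon>"

definition eps_sol_PC :: "(real^'n \<Rightarrow> real) \<Rightarrow> real \<Rightarrow> real^'n \<Rightarrow> bool" where
  "eps_sol_PC H \<epsilon> y \<longleftrightarrow> y \<in> std_simplex \<and> H y \<le> (INF y'\<in>std_simplex. H y') + \<epsilon>"

end

theory Submission
  imports Defs
begin

lemma diag_mv: "diag_mat m *v z = (\<chi> i. m$i * z$i)"
proof -
  have "\<And>i. (\<Sum>j\<in>UNIV. (if i = j then m$i else 0) * z$j) = (\<Sum>j\<in>UNIV. if i = j then m$i * z$j else 0)"
    by (rule sum.cong) auto
  then show ?thesis unfolding matrix_vector_mult_def diag_mat_def by (simp add: vec_eq_iff)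
qed

lemma diag_mul: "diag_mat a ** diag_mat b = diag_mat (\<chi> i. a$i * b$i)"
proof -
  have "\<And>i j. (\<Sum>k\<in>UNIV. (if i = k then a$i else 0) * (if k = j then b$k else 0)) = (if i = j then a$i * b$i else 0)"
  proof -
    fix i j
    have "(\<Sum>k\<in>UNIV. (if i = k then a$i else 0) * (if k = j then b$k else 0)) = (\<Sum>k\<in>UNIV. if k = i then (if i = j then a$i * b$i else 0) else 0)"
      by (rule sum.cong) auto
    then show "?thesis i j" by simp
  qed
  then show ?thesis unfolding matrix_matrix_mult_def diag_mat_def by (simp add: vec_eq_iff)
qed

lemma diag_one: "(\<forall>i. a$i = 1) \<Longrightarrow> diag_mat a = mat 1"
  unfolding diag_mat_def mat_def by (simp add: vec_eq_iff)

lemma matrix_inv_diag: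
  assumes "\<forall>i. l $ i \<noteq> (0::real)"
  shows "matrix_inv (diag_mat l) = diag_mat (\<chi> i. inverse (l$i))"
proof -
  let ?A = "diag_mat l" and ?D = "diag_mat (\<chi> i. inverse (l$i))"
  have 1: "?A ** ?D = mat 1" "?D ** ?A = mat 1"
    using assms by (auto simp: diag_mul intro!: diag_one)
  hence "\<exists>A'. ?A ** A' = mat 1 \<and> A' ** ?A = mat 1" by blast
  then have 2: "?A ** matrix_inv ?A = mat 1 \<and> matrix_inv ?A ** ?A = mat 1"
    unfolding matrix_inv_def by (rule someI_ex)
  have "matrix_inv ?A = matrix_inv ?A ** (?A ** ?D)" using 1 by (simp add: matrix_mul_rid)
  also have "\<dots> = (matrix_inv ?A ** ?A) ** ?D" by (simp add: matrix_mul_assoc)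
  also have "\<dots> = ?D" using 2 by (simp add: matrix_mul_lid)
  finally show ?thesis .
qed

lemma Mnorm_diag: "Mnorm (diag_mat m) z = sqrt (\<Sum>i\<in>UNIV. m$i * (z$i)^2)"
  unfolding Mnorm_def diag_mv inner_vec_def
  by (simp add: power2_eq_square mult_ac)

lemma sgn1_abs: "\<bar>sgn1 t\<bar> = 1" "sgn1 t * t = \<bar>t\<bar>" "(sgn1 t)^2 = 1"
  unfolding sgn1_def by auto

lemma powr_inv_powr: assumes "0 \<le> (y::real)" "p \<ge> 1" shows "(y powr (1/p)) powr p = y"
  using assms by (simp add: powr_powr)

lemma powr_sq: assumes "0 \<le> (y::real)" shows "(y powr (1/p))^2 = y powr (2/p)"
proof -
  have "(y powr (1/p))^2 = y powr (1/p + 1/p)" by (simp add: power2_eq_square powr_add[symmetric])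
  also have "1/p + 1/p = 2/p" by simp
  finally show ?thesis .
qed

lemma feasible:
  fixes p :: real and c l y :: "real^'n"
  assumes p: "p \<ge> 1" and l: "\<forall>i. l $ i > 0" and y: "y \<in> std_simplex"
  defines "x \<equiv> (\<chi> i. y $ i powr (1 / p) * sgn1 (c $ i))"
  defines "N \<equiv> sqrt (\<Sum>i\<in>UNIV. inverse (l$i) * (x$i)^2)"
  defines "\<theta> \<equiv> c + (1 / N) *\<^sub>R (\<chi> i. inverse (l$i) * x$i)"
  shows "pnorm p x = 1" "N > 0" "Mnorm (diag_mat l) (\<theta> - c) = 1" "x \<bullet> \<theta> = - Hfun p c l y"
    "N = sqrt (\<Sum>i\<in>UNIV. inverse (l $ i) * y $ i powr (2 / p))"
proof -
  have y0: "\<And>i. y$i \<ge> 0" and ys: "(\<Sum>i\<in>UNIV. y $ i) = 1" using y by (auto simp: std_simplex_def)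
  have ax: "\<And>i. \<bar>x$i\<bar> = y$i powr (1/p)" unfolding x_def by (simp add: abs_mult sgn1_abs)
  show "pnorm p x = 1" unfolding pnorm_def ax using y0 p ys by (simp add: powr_inv_powr)
  have x2: "\<And>i. (x$i)^2 = y$i powr (2/p)"
    by (metis ax power2_abs powr_sq y0)
  show NN: "N = sqrt (\<Sum>i\<in>UNIV. inverse (l $ i) * y $ i powr (2 / p))"
    unfolding N_def x2 ..
  obtain j where "y$j \<noteq> 0" using ys by (metis (mono_tags) sum.neutral zero_neq_one)
  hence yj: "y$j > 0" using y0[of j] by simp
  have "0 < inverse (l $ j) * y $ j powr (2 / p)" using yj l by simp
  also have "\<dots> \<le> (\<Sum>i\<in>UNIV. inverse (l $ i) * y $ i powr (2 / p))"
    by (rule member_le_sum) (use l y0 in \<open>auto intro!: mult_nonneg_nonneg simp: less_imp_le\<close>)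
  finally have S: "0 < (\<Sum>i\<in>UNIV. inverse (l $ i) * y $ i powr (2 / p))" .
  then show Npos: "N > 0" unfolding NN by simp
  have sq: "(\<Sum>i\<in>UNIV. inverse (l$i) * (x$i)^2) = N^2" unfolding N_def
    using S x2 by simp
  have "\<theta> - c = (\<chi> i. (1/N) * (inverse (l$i) * x$i))" unfolding \<theta>_def by (simp add: vec_eq_iff)
  hence "Mnorm (diag_mat l) (\<theta> - c) = sqrt (\<Sum>i\<in>UNIV. l$i * ((1/N) * (inverse (l$i) * x$i))^2)"
    by (simp add: Mnorm_diag)
  also have "(\<Sum>i\<in>UNIV. l$i * ((1/N) * (inverse (l$i) * x$i))^2) = (1/N)^2 * (\<Sum>i\<in>UNIV. inverse (l$i) * (x$i)^2)"
    unfolding sum_distrib_left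
    by (rule sum.cong) (use l in \<open>auto simp: power2_eq_square field_simps\<close>)
  also have "\<dots> = 1" unfolding sq using Npos by (simp add: field_simps)
  finally show "Mnorm (diag_mat l) (\<theta> - c) = 1" by simp
  have "x \<bullet> \<theta> = x \<bullet> c + (1/N) * (\<Sum>i\<in>UNIV. inverse (l$i) * (x$i)^2)"
    unfolding \<theta>_def inner_add_right inner_scaleR_right
    by (simp add: inner_vec_def power2_eq_square mult_ac)
  also have "\<dots> = x \<bullet> c + N" unfolding sq using Npos by (simp add: power2_eq_square)
  also have "x \<bullet> c = (\<Sum>i\<in>UNIV. y $ i powr (1 / p) * \<bar>c $ i\<bar>)"
    unfolding x_def inner_vec_def by (simp add: mult.assoc sgn1_abs)
  finally show "x \<bullet> \<theta> = - Hfun p c l y" unfolding Hfun_def NN by simp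
qed

lemma Hbound:
  fixes p :: real and c l y :: "real^'n"
  assumes p: "p \<ge> 1" and l: "\<forall>i. l $ i > 0" and y: "y \<in> std_simplex"
  shows "- Hfun p c l y \<le> (\<Sum>i\<in>UNIV. \<bar>c$i\<bar>) + sqrt (\<Sum>i\<in>UNIV. inverse (l$i))"
proof -
  have y0: "\<And>i. y$i \<ge> 0" and ys: "(\<Sum>i\<in>UNIV. y $ i) = 1" using y by (auto simp: std_simplex_def)
  have y1: "y$i \<le> 1" for i
    using member_le_sum[of i UNIV "\<lambda>i. y$i"] y0 ys by simp
  have a: "y$i powr e \<le> 1" if "e \<ge> 0" for i e
    using powr_mono2[OF that y0[of i] y1[of i]] by simp
  have 1: "(\<Sum>i\<in>UNIV. y $ i powr (1 / p) * \<bar>c $ i\<bar>) \<le> (\<Sum>i\<in>UNIV. \<bar>c$i\<bar>)"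
    by (rule sum_mono) (use a p in \<open>auto intro!: mult_left_le_one_le\<close>)
  have 2: "(\<Sum>i\<in>UNIV. inverse (l $ i) * y $ i powr (2 / p)) \<le> (\<Sum>i\<in>UNIV. inverse (l$i))"
    by (rule sum_mono) (use a p l in \<open>auto intro!: mult_right_le_one_le simp: less_imp_le\<close>)
  show ?thesis using 1 real_sqrt_le_mono[OF 2] unfolding Hfun_def by linarith
qed

lemma upper:
  fixes p :: real and c l x t :: "real^'n"
  assumes p: "p \<ge> 1" and l: "\<forall>i. l $ i > 0" and xp: "pnorm p x \<le> 1"
    and tc: "Mnorm (diag_mat l) (t - c) \<le> 1"
  shows "\<exists>y\<in>std_simplex. x \<bullet> t \<le> - Hfun p c l y"
proof -
  define S where "S = (\<Sum>i\<in>UNIV. \<bar>x$i\<bar> powr p)"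
  have S0: "S \<ge> 0" unfolding S_def by (simp add: sum_nonneg)
  have "S = (S powr (1/p)) powr p" using S0 p by (simp add: powr_inv_powr)
  also have "\<dots> \<le> 1 powr p"
    by (rule powr_mono2) (use p xp in \<open>auto simp: pnorm_def S_def\<close>)
  finally have S1: "S \<le> 1" by simp
  define u where "u = (\<chi> i. x$i / sqrt (l$i))"
  define v where "v = (\<chi> i. sqrt (l$i) * (t-c)$i)"
  have "u \<bullet> v = x \<bullet> (t - c)" unfolding inner_vec_def
  proof (rule sum.cong[OF refl])
    fix i assume "i \<in> (UNIV::'n set)"
    have "l$i > 0" using l by blast
    then show "u $ i \<bullet> v $ i = x $ i \<bullet> (t - c) $ i" unfolding u_def v_def by simp
  qed
  moreover have "norm u = sqrt (\<Sum>i\<in>UNIV. inverse (l$i) * (x$i)^2)"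
    unfolding u_def norm_vec_def L2_set_def
    by (rule arg_cong[where f=sqrt], rule sum.cong) (use l in \<open>auto simp: power_divide field_simps less_imp_le[OF l[rule_format]]\<close>)
  moreover have "norm v = Mnorm (diag_mat l) (t - c)"
    unfolding v_def norm_vec_def L2_set_def Mnorm_diag
    by (rule arg_cong[where f=sqrt], rule sum.cong) (use l in \<open>auto simp: power_mult_distrib less_imp_le\<close>)
  ultimately have "x \<bullet> (t - c) \<le> sqrt (\<Sum>i\<in>UNIV. inverse (l$i) * (x$i)^2) * Mnorm (diag_mat l) (t - c)"
    by (metis norm_cauchy_schwarz)
  also have "\<dots> \<le> sqrt (\<Sum>i\<in>UNIV. inverse (l$i) * (x$i)^2)"
    by (rule mult_left_le[OF tc], rule real_sqrt_ge_zero, rule sum_nonneg) (use l in \<open>auto intro!: mult_nonneg_nonneg simp: less_imp_le[OF l[rule_format]]\<close>)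
  finally have cs: "x \<bullet> (t - c) \<le> sqrt (\<Sum>i\<in>UNIV. inverse (l$i) * (x$i)^2)" .
  have xc: "x \<bullet> c \<le> (\<Sum>i\<in>UNIV. \<bar>x$i\<bar> * \<bar>c$i\<bar>)"
    unfolding inner_vec_def by (rule sum_mono) (simp add: abs_mult[symmetric])
  define r where "r = (1 - S) / real CARD('n)"
  have r0: "r \<ge> 0" unfolding r_def using S1 by simp
  define y where "y = (\<chi> i. \<bar>x$i\<bar> powr p + r)"
  have ysim: "y \<in> std_simplex" unfolding std_simplex_def y_def
    using r0 by (auto simp: sum.distrib S_def[symmetric] r_def)
  have xy: "\<bar>x$i\<bar> \<le> y$i powr (1/p)" for i
  proof -
    have "\<bar>x$i\<bar> = (\<bar>x$i\<bar> powr p) powr (1/p)" using p by (simp add: powr_powr)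
    also have "\<dots> \<le> y$i powr (1/p)" by (rule powr_mono2) (use p r0 in \<open>auto simp: y_def\<close>)
    finally show ?thesis .
  qed
  have y0: "\<And>i. y$i \<ge> 0" using ysim by (auto simp: std_simplex_def)
  have 1: "(\<Sum>i\<in>UNIV. \<bar>x$i\<bar> * \<bar>c$i\<bar>) \<le> (\<Sum>i\<in>UNIV. y $ i powr (1 / p) * \<bar>c $ i\<bar>)"
    by (rule sum_mono) (use xy in \<open>auto intro: mult_right_mono\<close>)
  have 2: "(\<Sum>i\<in>UNIV. inverse (l$i) * (x$i)^2) \<le> (\<Sum>i\<in>UNIV. inverse (l $ i) * y $ i powr (2 / p))"
  proof (rule sum_mono)
    fix i
    have "(x$i)^2 = \<bar>x$i\<bar>^2" by simp
    also have "\<dots> \<le> (y$i powr (1/p))^2" by (rule power_mono[OF xy]) simp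
    also have "\<dots> = y$i powr (2/p)" using y0 by (simp add: powr_sq)
    finally show "inverse (l$i) * (x$i)^2 \<le> inverse (l $ i) * y $ i powr (2 / p)"
      using l by (simp add: mult_left_mono less_imp_le)
  qed
  have "x \<bullet> t = x \<bullet> c + x \<bullet> (t - c)" by (simp add: inner_diff_right)
  also have "\<dots> \<le> - Hfun p c l y" unfolding Hfun_def
    using xc cs 1 2 real_sqrt_le_mono[OF 2] by linarith
  finally show ?thesis using ysim by blast
qed

theorem theorem4:
  fixes p \<epsilon> :: real and c l y :: "real^'n"
  assumes "p \<ge> 1"
    and "\<forall>i. l $ i > 0"
    and "y \<in> std_simplex"
    and "\<epsilon> > 0"
  defines "W \<equiv> diag_mat l"
  defines "x \<equiv> (\<chi> i. y $ i powr (1 / p) * sgn1 (c $ i))"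
  defines "\<theta>s \<equiv> c + (1 / Mnorm (matrix_inv W) x) *\<^sub>R (matrix_inv W *v x)"
  shows "eps_sol_PC (Hfun p c l) \<epsilon> y \<longleftrightarrow> eps_sol_PB (Xset p) (Thetaset W c) \<epsilon> x \<theta>s"
proof -
  note p = assms(1) and l = assms(2) and y = assms(3)
  have MI: "matrix_inv W = diag_mat (\<chi> i. inverse (l$i))"
    unfolding W_def by (rule matrix_inv_diag) (use l in \<open>auto simp: less_imp_neq[symmetric]\<close>)
  have \<theta>eq: "\<theta>s = c + (1 / sqrt (\<Sum>i\<in>UNIV. inverse (l$i) * (x$i)^2)) *\<^sub>R (\<chi> i. inverse (l$i) * x$i)"
    unfolding \<theta>s_def MI Mnorm_diag diag_mv by simp
  note F = feasible[OF p l y, of c, folded x_def \<theta>eq]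
  define B where "B = (\<Sum>i\<in>UNIV. \<bar>c$i\<bar>) + sqrt (\<Sum>i\<in>UNIV. inverse (l$i))"
  let ?X = "Xset p :: (real^'n) set" and ?T = "Thetaset W c"
  let ?f = "\<lambda>xt::(real^'n) \<times> (real^'n). fst xt \<bullet> snd xt"
  define SV where "SV = (SUP xt\<in>?X \<times> ?T. ?f xt)"
  define IV where "IV = (INF y'\<in>std_simplex. Hfun p c l y')"
  have xX: "x \<in> ?X" using F(1) by (simp add: Xset_def)
  have tT: "\<theta>s \<in> ?T" using F(3) unfolding Thetaset_def W_def \<theta>eq by simp
  have up: "\<exists>y'\<in>std_simplex. ?f xt \<le> - Hfun p c l y'" if "xt \<in> ?X \<times> ?T" for xt
    using that upper[OF p l, of "fst xt" "snd xt" c] by (auto simp: Xset_def Thetaset_def W_def)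
  have Hb: "- Hfun p c l y' \<le> B" if "y' \<in> std_simplex" for y'
    using Hbound[OF p l that] by (simp add: B_def)
  have bda: "bdd_above (?f ` (?X \<times> ?T))"
  proof (rule bdd_aboveI2[where M=B])
    fix xt assume "xt \<in> ?X \<times> ?T"
    then obtain y' where "y' \<in> std_simplex" "?f xt \<le> - Hfun p c l y'" using up by blast
    then show "?f xt \<le> B" using Hb by (meson order_trans)
  qed
  have bdb: "bdd_below (Hfun p c l ` std_simplex)"
  proof (rule bdd_belowI2[where m="-B"])
    fix y' :: "real^'n" assume "y' \<in> std_simplex"
    from Hb[OF this] show "- B \<le> Hfun p c l y'" by linarith
  qed
  have "(x, \<theta>s) \<in> ?X \<times> ?T" using xX tT by (rule SigmaI)
  then have ne1: "?X \<times> ?T \<noteq> {}" by (metis empty_iff)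
  have ne2: "(std_simplex :: (real^'n) set) \<noteq> {}" using y by (metis empty_iff)
  have "SV \<le> - IV" unfolding SV_def
  proof (rule cSUP_least[OF ne1])
    fix xt assume "xt \<in> ?X \<times> ?T"
    then obtain y' where y': "y' \<in> std_simplex" "?f xt \<le> - Hfun p c l y'" using up by blast
    have "IV \<le> Hfun p c l y'" unfolding IV_def by (rule cINF_lower[OF bdb y'(1)])
    then show "?f xt \<le> - IV" using y'(2) by simp
  qed
  moreover have "- SV \<le> IV" unfolding IV_def
  proof (rule cINF_greatest[OF ne2])
    fix y' :: "real^'n" assume y': "y' \<in> std_simplex"
    define x' where "x' = (\<chi> i. y' $ i powr (1 / p) * sgn1 (c $ i))"
    define t' where "t' = c + (1 / sqrt (\<Sum>i\<in>UNIV. inverse (l$i) * (x'$i)^2)) *\<^sub>R (\<chi> i. inverse (l$i) * x'$i)"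
    note G = feasible[OF p l y', of c, folded x'_def t'_def]
    have "(x', t') \<in> ?X \<times> ?T" using G(1,3) unfolding Xset_def Thetaset_def W_def t'_def by simp
    hence "?f (x', t') \<le> SV" unfolding SV_def by (rule cSUP_upper[OF _ bda])
    then show "- SV \<le> Hfun p c l y'" using G(4) by (simp add: t'_def)
  qed
  ultimately have SI: "SV = - IV" by linarith
  have "x \<bullet> \<theta>s = - Hfun p c l y" using F(4) unfolding \<theta>eq .
  then show ?thesis
    unfolding eps_sol_PC_def eps_sol_PB_def SV_def[symmetric] IV_def[symmetric] SI
    using xX tT y by auto
qed

end
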